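(* Let $A\in\mathbb{R}^{n\times n}$ have rank one. Then $A$ is a Karamardian matrix if and only if its group inverse $A^{\#}$ (which exists in this case) is a Karamardian matrix. Moreover, in this case both $A$ and $A^{\#}$ are range monotone.
   Context: The group inverse $A^{\#}$ of a square $A$ is the unique $X$ (if it exists) with $AXA=A$, $XAX=X$, $AX=XA$. A square matrix $M$ is range monotone if $Mx\ge 0$ and $x\in R(M)$ imply $x\ge 0$. For $A\in\mathbb{R}^{n\times n}$ let $K_A=\mathbb{R}^n_+\cap R(A)$ and $K_A^*=\{y\in\mathbb{R}^n: x^Ty\ge 0 \text{ for all } x\in K_A\}$ (one has $K_A^*=\mathbb{R}^n_++N(A^T)$, and its interior is $\{a+b: a>0,\ b\in N(A^T)\}$). For $q\in\mathbb{R}^n$, LCP$(A,K_A,q)$ is to find $x$ with $x\in K_A$, $Ax+q\in K_A^*$, $x^T(Ax+q)=0$. $A$ is a Karamardian matrix if $K_A\ne\{0\}$ and there exists $d$ in the interior of $K_A^*$ such that both LCP$(A,K_A,0)$ and LCP$(A,K_A,d)$ have $x=0$ as their only solution. *)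

theory Defs
  imports "HOL-Analysis.Analysis"
begin

definition is_group_inverse :: "real^'n^'n \<Rightarrow> real^'n^'n \<Rightarrow> bool" where
  "is_group_inverse A X \<longleftrightarrow> A ** X ** A = A \<and> X ** A ** X = X \<and> A ** X = X ** A"

definition nonneg :: "real^'n \<Rightarrow> bool" where
  "nonneg x \<longleftrightarrow> (\<forall>i. x $ i \<ge> 0)"

definition range_monotone :: "real^'n^'n \<Rightarrow> bool" where
  "range_monotone M \<longleftrightarrow>
     (\<forall>x. nonneg (M *v x) \<and> x \<in> range (\<lambda>y. M *v y) \<longrightarrow> nonneg x)"

definition KA :: "real^'n^'n \<Rightarrow> (real^'n) set" where
  "KA A = {x. nonneg x} \<inter> range (\<lambda>y. A *v y)"

definition dual_cone :: "(real^'n) set \<Rightarrow> (real^'n) set" where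
  "dual_cone K = {y. \<forall>x\<in>K. x \<bullet> y \<ge> 0}"

definition lcp_sol :: "real^'n^'n \<Rightarrow> (real^'n) set \<Rightarrow> real^'n \<Rightarrow> real^'n \<Rightarrow> bool" where
  "lcp_sol A K q x \<longleftrightarrow> x \<in> K \<and> A *v x + q \<in> dual_cone K \<and> x \<bullet> (A *v x + q) = 0"

definition karamardian :: "real^'n^'n \<Rightarrow> bool" where
  "karamardian A \<longleftrightarrow> KA A \<noteq> {0} \<and>
     (\<exists>d \<in> interior (dual_cone (KA A)).
        (\<forall>x. lcp_sol A (KA A) 0 x \<longleftrightarrow> x = 0) \<and>
        (\<forall>x. lcp_sol A (KA A) d x \<longleftrightarrow> x = 0))"

end

theory Submission
  imports Defs
begin
lemma rank1_range:
  fixes A :: "real^'n^'n"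
  assumes "rank A = 1"
  obtains u where "u \<noteq> 0" "range (\<lambda>y. A *v y) = range (\<lambda>s. s *\<^sub>R u)"
proof -
  let ?V = "range (\<lambda>y. A *v y)"
  have sub: "subspace ?V"
    using linear_subspace_image[OF matrix_vector_mul_linear[of A] subspace_UNIV] by simp
  obtain B where B: "B \<subseteq> ?V" "independent B" "?V \<subseteq> span B" "card B = dim ?V"
    using basis_exists by blast
  have "card B = 1" using B assms rank_dim_range by metis
  then obtain u where u: "B = {u}" using card_1_singletonE by blast
  have "u \<noteq> 0" using B(2) u dependent_single by blast
  moreover have "?V = span {u}"
    using B u sub by (metis span_eq span_subspace)
  ultimately show ?thesis using that by (simp add: span_singleton)
qed
lemma core:
  fixes M :: "real^'n^'n"
  assumes R: "range (\<lambda>y. M *v y) = range (\<lambda>s. s *\<^sub>R u)" and u0: "u \<noteq> 0"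
    and un: "nonneg u" and Mu: "M *v u = c *\<^sub>R u"
  shows "karamardian M \<longleftrightarrow> c > 0" and "c > 0 \<Longrightarrow> range_monotone M"
proof -
  obtain i where ui: "u $ i > 0"
  proof -
    obtain i where "u $ i \<noteq> 0" using u0 by (auto simp: vec_eq_iff)
    moreover have "u $ i \<ge> 0" using un unfolding nonneg_def by blast
    ultimately show ?thesis using that[of i] by linarith
  qed
  have snn: "nonneg (s *\<^sub>R u) \<longleftrightarrow> s \<ge> 0" for s
  proof
    assume "nonneg (s *\<^sub>R u)"
    then have "s * u $ i \<ge> 0" unfolding nonneg_def by (simp add: spec[of _ i])
    then show "s \<ge> 0" using ui by (simp add: zero_le_mult_iff)
  qed (use un in \<open>auto simp: nonneg_def\<close>)
  have K: "KA M = {t *\<^sub>R u | t. t \<ge> 0}"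
    unfolding KA_def R using snn by auto
  have D: "dual_cone (KA M) = {y. 0 \<le> u \<bullet> y}"
  proof (intro set_eqI iffI)
    fix y assume "y \<in> dual_cone (KA M)"
    moreover have "u \<in> KA M" unfolding K by (intro CollectI exI[of _ "1::real"]) simp
    ultimately have "u \<bullet> y \<ge> 0" unfolding dual_cone_def by blast
    then show "y \<in> {y. 0 \<le> u \<bullet> y}" by simp
  next
    fix y assume "y \<in> {y. 0 \<le> u \<bullet> y}"
    then show "y \<in> dual_cone (KA M)" unfolding dual_cone_def K by auto
  qed
  have I: "interior (dual_cone (KA M)) = {y. 0 < u \<bullet> y}"
    unfolding D using u0 by simp
  define N where "N = u \<bullet> u"
  have N: "N > 0" using u0 by (simp add: N_def)
  have Mt: "M *v (t *\<^sub>R u) = (t * c) *\<^sub>R u" for t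
    by (simp add: Mu matrix_vector_mult_scaleR)
  have L: "lcp_sol M (KA M) q x \<longleftrightarrow>
     (\<exists>t\<ge>0. x = t *\<^sub>R u \<and> t*c*N + u \<bullet> q \<ge> 0 \<and> t*(t*c*N + u \<bullet> q) = 0)" for q x
  proof -
    have e: "u \<bullet> (M *v (t *\<^sub>R u) + q) = t*c*N + u \<bullet> q" for t
      by (simp add: Mt inner_add_right N_def)
    have e2: "(t *\<^sub>R u) \<bullet> (M *v (t *\<^sub>R u) + q) = t*(t*c*N + u \<bullet> q)" for t
      using e[of t] by simp
    show ?thesis
    proof
      assume "lcp_sol M (KA M) q x"
      then have h: "x \<in> {t *\<^sub>R u | t. t \<ge> 0}" "M *v x + q \<in> {y. 0 \<le> u \<bullet> y}"
        "x \<bullet> (M *v x + q) = 0" unfolding lcp_sol_def D unfolding K by auto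
      then obtain t where t: "t \<ge> 0" "x = t *\<^sub>R u" by blast
      show "\<exists>t\<ge>0. x = t *\<^sub>R u \<and> t*c*N + u \<bullet> q \<ge> 0 \<and> t*(t*c*N + u \<bullet> q) = 0"
        using h(2,3) t e[of t] e2[of t] by (intro exI[of _ t]) simp
    next
      assume "\<exists>t\<ge>0. x = t *\<^sub>R u \<and> t*c*N + u \<bullet> q \<ge> 0 \<and> t*(t*c*N + u \<bullet> q) = 0"
      then obtain t where t: "t \<ge> 0" "x = t *\<^sub>R u" "t*c*N + u \<bullet> q \<ge> 0" "t*(t*c*N + u \<bullet> q) = 0"
        by blast
      have "x \<in> {t *\<^sub>R u | t. t \<ge> 0}" using t by blast
      moreover have "M *v x + q \<in> {y. 0 \<le> u \<bullet> y}"
      proof -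
        have "u \<bullet> (M *v x + q) = t*c*N + u \<bullet> q" using e[of t] t(2) by simp
        then show ?thesis using t(3) by simp
      qed
      moreover have "x \<bullet> (M *v x + q) = 0"
      proof -
        have "x \<bullet> (M *v x + q) = t*(t*c*N + u \<bullet> q)" using e2[of t] t(2) by simp
        then show ?thesis using t(4) by simp
      qed
      ultimately show "lcp_sol M (KA M) q x" unfolding lcp_sol_def D unfolding K by blast
    qed
  qed
  show "karamardian M \<longleftrightarrow> c > 0"
  proof
    assume k: "karamardian M"
    show "c > 0"
    proof (rule ccontr)
      assume "\<not> c > 0"
      then consider "c = 0" | "c < 0" by linarith
      then show False
      proof cases
        case 1
        have "lcp_sol M (KA M) 0 u" unfolding L
          by (rule exI[of _ 1]) (simp add: 1)
        then show False using k u0 unfolding karamardian_def by blast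
      next
        case 2
        from k obtain d where d: "d \<in> interior (dual_cone (KA M))"
          and dd: "\<forall>x. lcp_sol M (KA M) d x \<longleftrightarrow> x = 0"
          unfolding karamardian_def by blast
        have ud: "u \<bullet> d > 0" using d I by simp
        define t where "t = - (u \<bullet> d) / (c * N)"
        have tpos: "t > 0" unfolding t_def using ud 2 N
          by (simp add: divide_pos_neg mult_neg_pos)
        have e: "t*c*N + u \<bullet> d = 0" unfolding t_def using 2 N by simp
        have "lcp_sol M (KA M) d (t *\<^sub>R u)" unfolding L
          using tpos e by (intro exI[of _ t]) simp
        then have "t *\<^sub>R u = 0" using dd by blast
        then show False using tpos u0 by simp
      qed
    qed
  next
    assume c: "c > 0"
    have uniq: "lcp_sol M (KA M) q x \<longleftrightarrow> x = 0" if q: "u \<bullet> q \<ge> 0" for q x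
    proof
      assume "lcp_sol M (KA M) q x"
      then obtain t where t: "t \<ge> 0" "x = t *\<^sub>R u" "t*(t*c*N + u \<bullet> q) = 0"
        unfolding L by blast
      show "x = 0"
      proof (cases "t = 0")
        case False
        then have "t*c*N > 0" using t c N by simp
        then have "t*c*N + u \<bullet> q > 0" using q by linarith
        then show ?thesis using t False by simp
      qed (use t in simp)
    next
      assume "x = 0" then show "lcp_sol M (KA M) q x" unfolding L using q
        by (intro exI[of _ 0]) simp
    qed
    have "u \<in> KA M" unfolding K by (auto intro: exI[of _ 1])
    then have "KA M \<noteq> {0}" using u0 by auto
    moreover have "u \<in> interior (dual_cone (KA M))" using I N N_def by simp
    ultimately show "karamardian M" unfolding karamardian_def
      using uniq[of 0] uniq[of u] N N_def by auto
  qed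
  show "c > 0 \<Longrightarrow> range_monotone M"
  proof -
    assume c: "c > 0"
    show "range_monotone M" unfolding range_monotone_def
    proof (intro allI impI)
      fix x assume h: "nonneg (M *v x) \<and> x \<in> range (\<lambda>y. M *v y)"
      then obtain s where s: "x = s *\<^sub>R u" using R by auto
      have "nonneg ((s*c) *\<^sub>R u)" using h s Mt by metis
      then have "s * c \<ge> 0" using snn by blast
      then have "s \<ge> 0" using c by (simp add: zero_le_mult_iff)
      then show "nonneg x" using s snn by simp
    qed
  qed
qed
lemma core2:
  fixes M :: "real^'n^'n"
  assumes R: "range (\<lambda>y. M *v y) = range (\<lambda>s. s *\<^sub>R u)" and u0: "u \<noteq> 0"
    and Mu: "M *v u = c *\<^sub>R u"
  shows "karamardian M \<longleftrightarrow> c > 0 \<and> (nonneg u \<or> nonneg (-u))"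
    and "karamardian M \<Longrightarrow> range_monotone M"
proof -
  have R': "range (\<lambda>y. M *v y) = range (\<lambda>s. s *\<^sub>R (-u))"
  proof -
    have "range (\<lambda>s. s *\<^sub>R (-u)) = range (\<lambda>s. s *\<^sub>R u)"
    proof (intro set_eqI iffI)
      fix x assume "x \<in> range (\<lambda>s. s *\<^sub>R (-u))"
      then obtain s where "x = s *\<^sub>R (-u)" by blast
      then have "x = (-s) *\<^sub>R u" by simp
      then show "x \<in> range (\<lambda>s. s *\<^sub>R u)" by blast
    next
      fix x assume "x \<in> range (\<lambda>s. s *\<^sub>R u)"
      then obtain s where "x = s *\<^sub>R u" by blast
      then have "x = (-s) *\<^sub>R (-u)" by simp
      then show "x \<in> range (\<lambda>s. s *\<^sub>R (-u))" by blast
    qed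
    then show ?thesis using R by simp
  qed
  have Mu': "M *v (-u) = c *\<^sub>R (-u)"
  proof -
    have "M *v (-u) = M *v ((-1::real) *\<^sub>R u)" by simp
    also have "\<dots> = (-1::real) *\<^sub>R (c *\<^sub>R u)" by (simp only: matrix_vector_mult_scaleR Mu)
    also have "\<dots> = c *\<^sub>R (-u)" by simp
    finally show ?thesis .
  qed
  have main: "karamardian M \<longleftrightarrow> c > 0 \<and> (nonneg u \<or> nonneg (-u))"
  proof (cases "nonneg u")
    case True
    then show ?thesis using core(1)[OF R u0 True Mu] by blast
  next
    case F1: False
    show ?thesis
    proof (cases "nonneg (-u)")
      case True
      then show ?thesis using core(1)[OF R' _ True Mu'] u0 F1 by simp
    next
      case False
      have "KA M \<subseteq> {0}"
      proof
        fix x assume "x \<in> KA M"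
        then have x: "nonneg x" "x \<in> range (\<lambda>s. s *\<^sub>R u)" unfolding KA_def R by auto
        then obtain s where s: "x = s *\<^sub>R u" by blast
        show "x \<in> {0}"
        proof (cases "s = 0")
          case True then show ?thesis using s by simp
        next
          case sF: False
          show ?thesis
          proof (cases "s > 0")
            case True
            have "nonneg u"
              unfolding nonneg_def
            proof
              fix i
              have "s * u $ i \<ge> 0" using x(1) s unfolding nonneg_def by (simp add: spec[of _ i])
              then show "u $ i \<ge> 0" using True by (simp add: zero_le_mult_iff)
            qed
            then show ?thesis using F1 by blast
          next
            case False
            then have sn: "s < 0" using sF by linarith
            have "nonneg (-u)"
              unfolding nonneg_def
            proof
              fix i
              have "s * u $ i \<ge> 0" using x(1) s unfolding nonneg_def by (simp add: spec[of _ i])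
              then show "(-u) $ i \<ge> 0" using sn by (simp add: zero_le_mult_iff)
            qed
            then show ?thesis using \<open>\<not> nonneg (-u)\<close> by blast
          qed
        qed
      qed
      moreover have "0 \<in> KA M" unfolding KA_def nonneg_def
        by (auto intro: range_eqI[of _ _ 0])
      ultimately have "KA M = {0}" by blast
      then show ?thesis using F1 False unfolding karamardian_def by blast
    qed
  qed
  show "karamardian M \<longleftrightarrow> c > 0 \<and> (nonneg u \<or> nonneg (-u))" by (rule main)
  show "karamardian M \<Longrightarrow> range_monotone M"
  proof -
    assume k: "karamardian M"
    then have c: "c > 0" "nonneg u \<or> nonneg (-u)" using main by auto
    show "range_monotone M"
    proof (cases "nonneg u")
      case True then show ?thesis using core(2)[OF R u0 True Mu c(1)] by blast
    next
      case False then have "nonneg (-u)" using c by blast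
      then show ?thesis using core(2)[OF R' _ _ Mu' c(1)] u0 by simp
    qed
  qed
qed
lemma gi_facts:
  fixes A X :: "real^'n^'n"
  assumes R: "range (\<lambda>y. A *v y) = range (\<lambda>s. s *\<^sub>R u)" and u0: "u \<noteq> 0"
    and Au: "A *v u = l *\<^sub>R u" and G: "is_group_inverse A X"
  shows "l \<noteq> 0" "range (\<lambda>y. X *v y) = range (\<lambda>s. s *\<^sub>R u)" "X *v u = (1/l) *\<^sub>R u"
proof -
  have g1: "A ** X ** A = A" and g2: "X ** A ** X = X" and g3: "A ** X = X ** A"
    using G unfolding is_group_inverse_def by auto
  have AXA: "A *v w = X *v (A *v (A *v w))" for w
  proof -
    have "X *v (A *v (A *v w)) = (X ** A ** A) *v w" by (metis matrix_vector_mul_assoc)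
    also have "X ** A ** A = A" using g1 g3 by simp
    finally show ?thesis by simp
  qed
  have XAX: "X *v w = A *v (X *v (X *v w))" for w
  proof -
    have "A *v (X *v (X *v w)) = (A ** X ** X) *v w" by (metis matrix_vector_mul_assoc)
    also have "A ** X ** X = X" using g2 g3 by simp
    finally show ?thesis by simp
  qed
  have As: "A *v (s *\<^sub>R u) = (s * l) *\<^sub>R u" for s
    by (simp add: Au matrix_vector_mult_scaleR)
  have Aw: "\<exists>s. A *v w = s *\<^sub>R u" for w
  proof -
    have "A *v w \<in> range (\<lambda>y. A *v y)" by blast
    then show ?thesis unfolding R by blast
  qed
  show l0: "l \<noteq> 0"
  proof
    assume l: "l = 0"
    have "A *v w = 0" for w
    proof -
      obtain s where s: "A *v w = s *\<^sub>R u" using Aw by blast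
      have "A *v (A *v w) = 0" using s As l by simp
      then show ?thesis using AXA[of w] by simp
    qed
    moreover have "u \<in> range (\<lambda>y. A *v y)" unfolding R by (rule range_eqI[of _ _ 1]) simp
    ultimately show False using u0 by auto
  qed
  have "range (\<lambda>y. X *v y) = range (\<lambda>y. A *v y)"
  proof (intro set_eqI iffI)
    fix x assume "x \<in> range (\<lambda>y. X *v y)"
    then obtain w where "x = X *v w" by blast
    then have "x = A *v (X *v (X *v w))" using XAX by simp
    then show "x \<in> range (\<lambda>y. A *v y)" by blast
  next
    fix x assume "x \<in> range (\<lambda>y. A *v y)"
    then obtain w where "x = A *v w" by blast
    then have "x = X *v (A *v (A *v w))" using AXA by simp
    then show "x \<in> range (\<lambda>y. X *v y)" by blast
  qed
  then show RX: "range (\<lambda>y. X *v y) = range (\<lambda>s. s *\<^sub>R u)" using R by simp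
  have "X *v u \<in> range (\<lambda>y. X *v y)" by blast
  then obtain m where m: "X *v u = m *\<^sub>R u" unfolding RX by blast
  have "A *v u = X *v (A *v (A *v u))" by (rule AXA)
  also have "\<dots> = (l * l * m) *\<^sub>R u" using Au As m by (simp add: matrix_vector_mult_scaleR)
  finally have "(l * l * m) *\<^sub>R u = l *\<^sub>R u" using Au by simp
  then have "l * l * m = l" using u0 by (simp add: scaleR_cancel_right)
  then have "m = 1 / l" using l0 by (simp add: field_simps)
  then show "X *v u = (1/l) *\<^sub>R u" using m by simp
qed

lemma gi_exists:
  fixes A :: "real^'n^'n"
  assumes R: "range (\<lambda>y. A *v y) = range (\<lambda>s. s *\<^sub>R u)"
    and Au: "A *v u = l *\<^sub>R u" and l0: "l \<noteq> 0"
  shows "is_group_inverse A ((1 / (l*l)) *\<^sub>R A)"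
proof -
  define X where "X = (1 / (l*l)) *\<^sub>R A"
  have As: "A *v (s *\<^sub>R u) = (s * l) *\<^sub>R u" for s
    by (simp add: Au matrix_vector_mult_scaleR)
  have Xs: "X *v (s *\<^sub>R u) = (s / l) *\<^sub>R u" for s
    using l0 by (simp add: X_def scaleR_matrix_vector_assoc[symmetric] As)
  have Aw: "\<exists>s. A *v w = s *\<^sub>R u" for w
  proof -
    have "A *v w \<in> range (\<lambda>y. A *v y)" by blast
    then show ?thesis unfolding R by blast
  qed
  have Xw: "\<exists>s. X *v w = s *\<^sub>R u" for w
  proof -
    obtain s where s: "A *v w = s *\<^sub>R u" using Aw by blast
    have "X *v w = (s / (l*l)) *\<^sub>R u"
      by (simp add: X_def scaleR_matrix_vector_assoc[symmetric] s)
    then show ?thesis by blast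
  qed
  have 1: "A ** X ** A = A" unfolding matrix_eq
  proof
    fix w obtain s where s: "A *v w = s *\<^sub>R u" using Aw by blast
    show "(A ** X ** A) *v w = A *v w"
      using l0 by (simp add: matrix_vector_mul_assoc[symmetric] s Xs As)
  qed
  have 2: "X ** A ** X = X" unfolding matrix_eq
  proof
    fix w obtain s where s: "X *v w = s *\<^sub>R u" using Xw by blast
    show "(X ** A ** X) *v w = X *v w"
      using l0 by (simp add: matrix_vector_mul_assoc[symmetric] s Xs As)
  qed
  have 3: "A ** X = X ** A" unfolding matrix_eq
  proof
    fix w obtain s where s: "A *v w = s *\<^sub>R u" using Aw by blast
    show "(A ** X) *v w = (X ** A) *v w"
      using l0 by (simp add: matrix_vector_mul_assoc[symmetric] s Xs X_def scaleR_matrix_vector_assoc[symmetric] As)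
  qed
  show ?thesis using 1 2 3 unfolding is_group_inverse_def X_def by blast
qed

theorem mainTheorem7:
  fixes A :: "real^'n^'n"
  assumes "rank A = 1"
  shows "(karamardian A \<longleftrightarrow> (\<exists>X. is_group_inverse A X \<and> karamardian X))
       \<and> (karamardian A \<longrightarrow>
            range_monotone A \<and> (\<forall>X. is_group_inverse A X \<longrightarrow> range_monotone X))"
proof -
  obtain u where u0: "u \<noteq> 0" and R: "range (\<lambda>y. A *v y) = range (\<lambda>s. s *\<^sub>R u)"
    using rank1_range[OF assms] by blast
  have "A *v u \<in> range (\<lambda>y. A *v y)" by blast
  then obtain l where Au: "A *v u = l *\<^sub>R u" unfolding R by blast
  let ?P = "nonneg u \<or> nonneg (-u)"
  have kA: "karamardian A \<longleftrightarrow> l > 0 \<and> ?P" using core2(1)[OF R u0 Au] .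
  have kX: "karamardian X \<longleftrightarrow> l > 0 \<and> ?P" and rX: "karamardian X \<Longrightarrow> range_monotone X"
    if G: "is_group_inverse A X" for X
  proof -
    have f: "range (\<lambda>y. X *v y) = range (\<lambda>s. s *\<^sub>R u)" "X *v u = (1/l) *\<^sub>R u"
      using gi_facts[OF R u0 Au G] by auto
    show "karamardian X \<longleftrightarrow> l > 0 \<and> ?P" using core2(1)[OF f(1) u0 f(2)] by simp
    show "karamardian X \<Longrightarrow> range_monotone X" using core2(2)[OF f(1) u0 f(2)] by blast
  qed
  have 1: "karamardian A \<longleftrightarrow> (\<exists>X. is_group_inverse A X \<and> karamardian X)"
  proof
    assume k: "karamardian A"
    then have "l \<noteq> 0" using kA by auto
    then have G: "is_group_inverse A ((1 / (l*l)) *\<^sub>R A)" using gi_exists[OF R Au] by blast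
    then show "\<exists>X. is_group_inverse A X \<and> karamardian X" using kX[OF G] kA k by blast
  next
    assume "\<exists>X. is_group_inverse A X \<and> karamardian X"
    then obtain X where "is_group_inverse A X" "karamardian X" by blast
    then show "karamardian A" using kX kA by blast
  qed
  have 2: "karamardian A \<longrightarrow> range_monotone A \<and> (\<forall>X. is_group_inverse A X \<longrightarrow> range_monotone X)"
    using core2(2)[OF R u0 Au] kA kX rX by blast
  show ?thesis using 1 2 by blast
qed
end
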